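(* Consider the evolution equation $\dot u=Au+Bu$ and methods (approximations $\Phi(h)$ of $e^{h(A+B)}$, with products read from left to right). (i) (Family I.) Let $\Phi^{[1]}(h)$ be a first-order method and define recursively, for $q=1,2,\dots$, $$\Phi^{[q+1]}(h)=\prod_{i=1}^{m_q}\Phi^{[q]}(\alpha_{q,i}h),$$ where for each $q$ the complex numbers $\alpha_{q,1},\dots,\alpha_{q,m_q}$ are all nonzero and satisfy $\sum_{i=1}^{m_q}\alpha_{q,i}=1$ and $\sum_{i=1}^{m_q}\alpha_{q,i}^{q+1}=0$ (so that $\Phi^{[q+1]}$ has order $q+1$). Then $\Phi^{[p+1]}(h)$ can be written as $$\Phi^{[p+1]}(h)=\prod_{i_p=1}^{m_p}\Big(\prod_{i_{p-1}=1}^{m_{p-1}}\Big(\cdots\Big(\prod_{i_1=1}^{m_1}\Phi^{[1]}(\alpha_{p,i_p}\alpha_{p-1,i_{p-1}}\cdots\alpha_{1,i_1}h)\Big)\cdots\Big)\Big),$$ and its coefficients are the products $\prod_{j=1}^p\alpha_{j,i_j}$, $1\le i_1\le m_1,\dots,1\le i_p\le m_p$. For every $p\geq 3$, every such method $\Phi^{[p+1]}(h)$ of order $p+1$ has at least one coefficient with negative real part. (ii) (Family II.) Let $\tilde\Phi^{[2]}(h)$ be a symmetric second-order method and define recursively, for $q=1,2,\dots$, the symmetric compositions $$\tilde\Phi^{[2q+2]}(h)=\prod_{i=1}^{m_q}\tilde\Phi^{[2q]}(\alpha_{q,i}h),$$ where for each $q$ the complex numbers $\alpha_{q,1},\dots,\alpha_{q,m_q}$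 are nonzero, satisfy $\alpha_{q,m_q+1-i}=\alpha_{q,i}$ for all $i$, $\sum_{i=1}^{m_q}\alpha_{q,i}=1$ and $\sum_{i=1}^{m_q}\alpha_{q,i}^{2q+1}=0$ (so that $\tilde\Phi^{[2q+2]}$ is symmetric of order $2q+2$). The coefficients of $\tilde\Phi^{[2p+2]}(h)$ are the products $\prod_{j=1}^p\alpha_{j,i_j}$, $1\le i_j\le m_j$, by which $h$ is multiplied in the corresponding expanded composition of $\tilde\Phi^{[2]}$. For every $p\geq 7$, every such method $\tilde\Phi^{[2p+2]}(h)$ of order $2p+2$ has at least one coefficient with negative real part.
   Context: A method $\Phi(h)$ is of order $p$ if $\Phi(h)-e^{h(A+B)}=\mathcal{O}(h^{p+1})$ as a formal expansion in $h$ for arbitrary non-commuting operators $A,B$. A method is symmetric if $\Phi(h)\Phi(-h)=\mathrm{Id}$. *)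

theory Defs
  imports Complex_Main
begin

definition composition_coeffs ::
  "nat \<Rightarrow> (nat \<Rightarrow> nat) \<Rightarrow> (nat \<Rightarrow> nat \<Rightarrow> complex) \<Rightarrow> complex set" where
  "composition_coeffs p m \<alpha> =
     {\<Prod>j\<in>{1..p}. \<alpha> j (i j) | i. \<forall>j\<in>{1..p}. 1 \<le> i j \<and> i j \<le> m j}"

definition familyI_coeffs ::
  "nat \<Rightarrow> (nat \<Rightarrow> nat) \<Rightarrow> (nat \<Rightarrow> nat \<Rightarrow> complex) \<Rightarrow> bool" where
  "familyI_coeffs p m \<alpha> \<longleftrightarrow>
     (\<forall>q\<in>{1..p}.
        (\<forall>i\<in>{1..m q}. \<alpha> q i \<noteq> 0) \<and>
        (\<Sum>i\<in>{1..m q}. \<alpha> q i) = 1 \<and>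
        (\<Sum>i\<in>{1..m q}. \<alpha> q i ^ (q + 1)) = 0)"

definition familyII_coeffs ::
  "nat \<Rightarrow> (nat \<Rightarrow> nat) \<Rightarrow> (nat \<Rightarrow> nat \<Rightarrow> complex) \<Rightarrow> bool" where
  "familyII_coeffs p m \<alpha> \<longleftrightarrow>
     (\<forall>q\<in>{1..p}.
        (\<forall>i\<in>{1..m q}. \<alpha> q i \<noteq> 0) \<and>
        (\<forall>i\<in>{1..m q}. \<alpha> q (m q + 1 - i) = \<alpha> q i) \<and>
        (\<Sum>i\<in>{1..m q}. \<alpha> q i) = 1 \<and>
        (\<Sum>i\<in>{1..m q}. \<alpha> q i ^ (2 * q + 1)) = 0)"

end

theory Submission
  imports Defs
begin

lemma prod_rcis: "finite K \<Longrightarrow> (\<Prod>j\<in>K. rcis (r j) (t j)) = rcis (\<Prod>j\<in>K. r j) (\<Sum>j\<in>K. t j)"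
  by (induction K rule: finite_induct) (auto simp: rcis_mult)

lemma cos_neg_hi: "pi/2 < x \<Longrightarrow> x \<le> pi \<Longrightarrow> cos x < 0"
proof -
  assume a: "pi/2 < x" "x \<le> pi"
  have "0 < cos (x - pi)" by (rule cos_gt_zero_pi) (use a in auto)
  thus ?thesis by simp
qed

lemma cos_neg_lo: "-pi \<le> x \<Longrightarrow> x < -(pi/2) \<Longrightarrow> cos x < 0"
proof -
  assume a: "-pi \<le> x" "x < -(pi/2)"
  have "0 < cos (x + pi)" by (rule cos_gt_zero_pi) (use a in auto)
  thus ?thesis by simp
qed

lemma Arg_H: assumes "z \<noteq> 0" "Re z \<ge> 0" shows "-(pi/2) \<le> Arg z \<and> Arg z \<le> pi/2"
proof -
  have c: "cos (Arg z) \<ge> 0" using assms by (simp add: cos_Arg)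
  have b: "- pi < Arg z" "Arg z \<le> pi" using Arg_bounded by auto
  show ?thesis
  proof (rule ccontr)
    assume "\<not> ?thesis"
    then have "pi/2 < Arg z \<or> Arg z < -(pi/2)" by auto
    then have "cos (Arg z) < 0" using b cos_neg_hi cos_neg_lo by force
    thus False using c by simp
  qed
qed

lemma spread:
  fixes S :: "nat set" and f :: "nat \<Rightarrow> complex" and n :: nat
  assumes fin: "finite S" and ne: "S \<noteq> {}" and nz: "\<forall>i\<in>S. f i \<noteq> 0"
    and z: "(\<Sum>i\<in>S. f i ^ n) = 0" and npos: "n > 0"
    and lo: "\<forall>i\<in>S. lo \<le> Arg (f i)" and hi: "\<forall>i\<in>S. Arg (f i) \<le> hi"
  shows "hi - lo \<ge> pi / n"
proof (rule ccontr)
  assume "\<not> ?thesis"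
  then have w: "real n * (hi - lo) < pi" using npos by (simp add: field_simps)
  define c where "c = (hi + lo) / 2"
  have eq: "cis (- (real n * c)) * f i ^ n = rcis (cmod (f i) ^ n) (real n * (Arg (f i) - c))" for i
  proof -
    have "f i ^ n = rcis (cmod (f i) ^ n) (real n * Arg (f i))"
      by (metis DeMoivre2 rcis_cmod_Arg)
    thus ?thesis by (simp add: cis_rcis_eq rcis_mult algebra_simps)
  qed
  have pos: "Re (cis (- (real n * c)) * f i ^ n) > 0" if "i \<in> S" for i
  proof -
    have "\<bar>Arg (f i) - c\<bar> \<le> (hi - lo)/2"
    proof -
      have "lo \<le> Arg (f i)" "Arg (f i) \<le> hi" using lo hi that by auto
      thus ?thesis unfolding c_def abs_le_iff by (auto simp: field_simps)
    qed
    then have "\<bar>real n * (Arg (f i) - c)\<bar> \<le> real n * ((hi - lo)/2)"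
      by (simp add: abs_mult mult_left_mono del: times_divide_eq_right)
    also have "\<dots> < pi/2" using w by simp
    finally have "cos (real n * (Arg (f i) - c)) > 0"
      by (intro cos_gt_zero_pi) (auto simp: abs_less_iff)
    moreover have "cmod (f i) ^ n > 0" using nz that by simp
    ultimately show ?thesis unfolding eq by simp
  qed
  have "(\<Sum>i\<in>S. Re (cis (- (real n * c)) * f i ^ n)) > 0"
    using pos fin ne by (intro sum_pos) auto
  moreover have "(\<Sum>i\<in>S. cis (- (real n * c)) * f i ^ n) = 0"
    using z by (simp add: sum_distrib_left[symmetric])
  ultimately show False by (metis Re_sum zero_complex.sel(1) less_irrefl)
qed

lemma Im_neg: assumes "z \<noteq> 0" "-(pi/2) \<le> Arg z" "Arg z < 0" shows "Im z < 0"
proof -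
  have "sin (- Arg z) > 0" using assms by (intro sin_gt_zero) auto
  then have "sin (Arg z) < 0" by simp
  moreover have "Im z = cmod z * sin (Arg z)" using assms(1) by (simp add: sin_Arg)
  moreover have "cmod z > 0" using assms(1) by simp
  ultimately show ?thesis by (simp add: mult_pos_neg)
qed

lemma Im_pos: assumes "z \<noteq> 0" "Arg z \<le> pi/2" "0 < Arg z" shows "Im z > 0"
proof -
  have "sin (Arg z) > 0" using assms by (intro sin_gt_zero) auto
  moreover have "Im z = cmod z * sin (Arg z)" using assms(1) by (simp add: sin_Arg)
  moreover have "cmod z > 0" using assms(1) by simp
  ultimately show ?thesis by simp
qed

lemma main:
  fixes p :: nat and m :: "nat \<Rightarrow> nat" and \<alpha> :: "nat \<Rightarrow> nat \<Rightarrow> complex" and n :: "nat \<Rightarrow> nat"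
  assumes nz: "\<forall>q\<in>{1..p}. \<forall>i\<in>{1..m q}. \<alpha> q i \<noteq> 0"
  and s1: "\<forall>q\<in>{1..p}. (\<Sum>i\<in>{1..m q}. \<alpha> q i) = 1"
  and sn: "\<forall>q\<in>{1..p}. (\<Sum>i\<in>{1..m q}. \<alpha> q i ^ n q) = 0"
  and np: "\<forall>q\<in>{1..p}. n q > 0"
  and big: "(\<Sum>q\<in>{1..p}. 1 / real (n q)) > 1"
  shows "\<exists>c\<in>composition_coeffs p m \<alpha>. Re c < 0"
proof (rule ccontr)
  assume "\<not> ?thesis"
  then have H: "Re (\<Prod>j\<in>{1..p}. \<alpha> j (i j)) \<ge> 0" if "\<forall>j\<in>{1..p}. 1 \<le> i j \<and> i j \<le> m j" for i
    using that unfolding composition_coeffs_def by (auto simp: not_less)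
  have mne: "{1..m q} \<noteq> {}" if "q \<in> {1..p}" for q
    using s1 that by fastforce
  have Q: "\<forall>i. (\<forall>j\<in>{1..p}-D. 1 \<le> i j \<and> i j \<le> m j) \<longrightarrow> Re (\<Prod>j\<in>{1..p}-D. \<alpha> j (i j)) \<ge> 0"
    if DD: "D \<subseteq> {1..p}" for D
  proof -
    have "finite D" using DD by (rule finite_subset) simp
    then show ?thesis using DD
    proof (induction D rule: finite_induct)
      case empty thus ?case using H by simp
    next
      case (insert x D)
      show ?case
      proof (intro allI impI)
        fix i assume iv: "\<forall>j\<in>{1..p} - insert x D. 1 \<le> i j \<and> i j \<le> m j"
        have xK: "x \<in> {1..p} - D" using insert by auto
        have K': "{1..p} - insert x D = ({1..p} - D) - {x}" by auto
        have "(\<Prod>j\<in>{1..p} - insert x D. \<alpha> j (i j)) = (\<Prod>j\<in>{1..p} - insert x D. \<alpha> j (i j)) * (\<Sum>t\<in>{1..m x}. \<alpha> x t)"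
          using s1 xK by simp
        also have "\<dots> = (\<Sum>t\<in>{1..m x}. \<Prod>j\<in>{1..p} - D. \<alpha> j ((i(x:=t)) j))"
        proof -
          have "(\<Prod>j\<in>{1..p} - D. \<alpha> j ((i(x:=t)) j)) = \<alpha> x t * (\<Prod>j\<in>{1..p} - insert x D. \<alpha> j (i j))" for t
          proof -
            have "(\<Prod>j\<in>{1..p} - D. \<alpha> j ((i(x:=t)) j)) = \<alpha> x t * (\<Prod>j\<in>({1..p} - D) - {x}. \<alpha> j ((i(x:=t)) j))"
              using xK by (subst prod.remove[of _ x]) auto
            also have "(\<Prod>j\<in>({1..p} - D) - {x}. \<alpha> j ((i(x:=t)) j)) = (\<Prod>j\<in>{1..p} - insert x D. \<alpha> j (i j))"
              unfolding K' by (rule prod.cong) auto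
            finally show ?thesis .
          qed
          thus ?thesis by (simp add: sum_distrib_right mult.commute)
        qed
        finally have eq: "(\<Prod>j\<in>{1..p} - insert x D. \<alpha> j (i j)) = (\<Sum>t\<in>{1..m x}. \<Prod>j\<in>{1..p} - D. \<alpha> j ((i(x:=t)) j))" .
        have "Re (\<Sum>t\<in>{1..m x}. \<Prod>j\<in>{1..p} - D. \<alpha> j ((i(x:=t)) j)) \<ge> 0"
          unfolding Re_sum
        proof (rule sum_nonneg)
          fix t assume t: "t \<in> {1..m x}"
          have "\<forall>j\<in>{1..p}-D. 1 \<le> (i(x:=t)) j \<and> (i(x:=t)) j \<le> m j" using iv t by auto
          then show "Re (\<Prod>j\<in>{1..p} - D. \<alpha> j ((i(x:=t)) j)) \<ge> 0" using insert.IH insert.prems by auto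
        qed
        then show "Re (\<Prod>j\<in>{1..p} - insert x D. \<alpha> j (i j)) \<ge> 0" using eq by simp
      qed
    qed
  qed
  have Hs: "Re (\<alpha> q i) \<ge> 0" if q: "q\<in>{1..p}" and i: "i\<in>{1..m q}" for q i
  proof -
    have e: "{1..p} - ({1..p}-{q}) = {q}" using q by auto
    show ?thesis using Q[of "{1..p}-{q}"] i unfolding e by (auto dest: spec[of _ "\<lambda>_. i"])
  qed
  have Hp: "Re (\<Prod>j\<in>{1..k}. \<alpha> j (i j)) \<ge> 0" if "k \<le> p" "\<forall>j\<in>{1..k}. 1 \<le> i j \<and> i j \<le> m j" for k i
  proof -
    have e: "{1..p} - {k+1..p} = {1..k}" using that(1) by auto
    show ?thesis using Q[of "{k+1..p}"] that(2) unfolding e by auto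
  qed
  define a where "a q i = Arg (\<alpha> q i)" for q i
  define M where "M q = Max (a q ` {1..m q})" for q
  define mi where "mi q = Min (a q ` {1..m q})" for q
  have aH: "-(pi/2) \<le> a q i \<and> a q i \<le> pi/2" if "q\<in>{1..p}" "i\<in>{1..m q}" for q i
    unfolding a_def using Arg_H Hs nz that by blast
  have Mge: "a q i \<le> M q" and mile: "mi q \<le> a q i" if "i\<in>{1..m q}" for q i
    unfolding M_def mi_def using that by auto
  have "\<forall>q\<in>{1..p}. \<exists>i. i\<in>{1..m q} \<and> a q i = M q"
  proof
    fix q assume "q\<in>{1..p}"
    then have "M q \<in> a q ` {1..m q}" unfolding M_def using mne by (intro Max_in) auto
    thus "\<exists>i. i\<in>{1..m q} \<and> a q i = M q" by auto
  qed
  then obtain imax where imax: "\<forall>q\<in>{1..p}. imax q \<in> {1..m q} \<and> a q (imax q) = M q"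
    by metis
  have "\<forall>q\<in>{1..p}. \<exists>i. i\<in>{1..m q} \<and> a q i = mi q"
  proof
    fix q assume "q\<in>{1..p}"
    then have "mi q \<in> a q ` {1..m q}" unfolding mi_def using mne by (intro Min_in) auto
    thus "\<exists>i. i\<in>{1..m q} \<and> a q i = mi q" by auto
  qed
  then obtain imin where imin: "\<forall>q\<in>{1..p}. imin q \<in> {1..m q} \<and> a q (imin q) = mi q"
    by metis
  have Mb: "0 \<le> M q \<and> M q \<le> pi/2" if q: "q\<in>{1..p}" for q
  proof
    show "M q \<le> pi/2" using imax aH q by metis
    show "0 \<le> M q"
    proof (rule ccontr)
      assume "\<not> 0 \<le> M q"
      then have "Im (\<alpha> q i) < 0" if "i\<in>{1..m q}" for i
        using Im_neg[of "\<alpha> q i"] nz aH[OF q that] Mge[OF that] q that unfolding a_def by force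
      then have "(\<Sum>i\<in>{1..m q}. - Im (\<alpha> q i)) > 0" using mne[OF q] by (intro sum_pos) auto
      then have "(\<Sum>i\<in>{1..m q}. Im (\<alpha> q i)) < 0" by (simp add: sum_negf)
      moreover have "(\<Sum>i\<in>{1..m q}. Im (\<alpha> q i)) = 0" using s1 q by (metis Im_sum one_complex.sel(2))
      ultimately show False by simp
    qed
  qed
  have mb: "-(pi/2) \<le> mi q \<and> mi q \<le> 0" if q: "q\<in>{1..p}" for q
  proof
    show "-(pi/2) \<le> mi q" using imin aH q by metis
    show "mi q \<le> 0"
    proof (rule ccontr)
      assume "\<not> mi q \<le> 0"
      then have "Im (\<alpha> q i) > 0" if "i\<in>{1..m q}" for i
        using Im_pos[of "\<alpha> q i"] nz aH[OF q that] mile[OF that] q that unfolding a_def by force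
      then have "(\<Sum>i\<in>{1..m q}. Im (\<alpha> q i)) > 0" using mne[OF q] by (intro sum_pos) auto
      moreover have "(\<Sum>i\<in>{1..m q}. Im (\<alpha> q i)) = 0" using s1 q by (metis Im_sum one_complex.sel(2))
      ultimately show False by simp
    qed
  qed
  have polar: "(\<Prod>j\<in>{1..k}. \<alpha> j (i j)) = rcis (\<Prod>j\<in>{1..k}. cmod (\<alpha> j (i j))) (\<Sum>j\<in>{1..k}. a j (i j))" for k i
    unfolding a_def by (subst prod_rcis[symmetric]) (simp_all add: rcis_cmod_Arg)
  have cpos: "(\<Prod>j\<in>{1..k}. cmod (\<alpha> j (i j))) > 0" if "k \<le> p" "\<forall>j\<in>{1..k}. i j \<in> {1..m j}" for k i
    using that nz by (intro prod_pos) auto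
  have SM: "k \<le> p \<Longrightarrow> (\<Sum>q\<in>{1..k}. M q) \<le> pi/2" for k
  proof (induction k)
    case 0 thus ?case by simp
  next
    case (Suc k)
    have IH: "(\<Sum>q\<in>{1..k}. M q) \<le> pi/2" using Suc by simp
    have eqs: "(\<Sum>q\<in>{1..Suc k}. M q) = (\<Sum>q\<in>{1..k}. M q) + M (Suc k)" by simp
    have MS: "M (Suc k) \<le> pi/2" using Mb Suc.prems by simp
    show ?case
    proof (rule ccontr)
      assume "\<not> ?case"
      then have th: "pi/2 < (\<Sum>q\<in>{1..Suc k}. M q)" "(\<Sum>q\<in>{1..Suc k}. M q) \<le> pi"
        using IH MS eqs by linarith+
      have iv: "\<forall>j\<in>{1..Suc k}. imax j \<in> {1..m j}" using imax Suc.prems by auto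
      have "(\<Sum>j\<in>{1..Suc k}. a j (imax j)) = (\<Sum>q\<in>{1..Suc k}. M q)"
        using imax Suc.prems by (intro sum.cong) auto
      then have "Re (\<Prod>j\<in>{1..Suc k}. \<alpha> j (imax j)) = (\<Prod>j\<in>{1..Suc k}. cmod (\<alpha> j (imax j))) * cos (\<Sum>q\<in>{1..Suc k}. M q)"
        unfolding polar Re_rcis by (simp only:)
      also have "\<dots> < 0" using cpos[OF Suc.prems iv] cos_neg_hi[OF th] by (simp add: mult_pos_neg)
      finally show False using Hp[OF Suc.prems, of imax] iv by auto
    qed
  qed
  have Sm: "k \<le> p \<Longrightarrow> (\<Sum>q\<in>{1..k}. mi q) \<ge> -(pi/2)" for k
  proof (induction k)
    case 0 thus ?case by simp
  next
    case (Suc k)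
    have IH: "(\<Sum>q\<in>{1..k}. mi q) \<ge> -(pi/2)" using Suc by simp
    have eqs: "(\<Sum>q\<in>{1..Suc k}. mi q) = (\<Sum>q\<in>{1..k}. mi q) + mi (Suc k)" by simp
    have MS: "mi (Suc k) \<ge> -(pi/2)" using mb Suc.prems by simp
    show ?case
    proof (rule ccontr)
      assume "\<not> ?case"
      then have th: "-pi \<le> (\<Sum>q\<in>{1..Suc k}. mi q)" "(\<Sum>q\<in>{1..Suc k}. mi q) < -(pi/2)"
        using IH MS eqs by linarith+
      have iv: "\<forall>j\<in>{1..Suc k}. imin j \<in> {1..m j}" using imin Suc.prems by auto
      have "(\<Sum>j\<in>{1..Suc k}. a j (imin j)) = (\<Sum>q\<in>{1..Suc k}. mi q)"
        using imin Suc.prems by (intro sum.cong) auto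
      then have "Re (\<Prod>j\<in>{1..Suc k}. \<alpha> j (imin j)) = (\<Prod>j\<in>{1..Suc k}. cmod (\<alpha> j (imin j))) * cos (\<Sum>q\<in>{1..Suc k}. mi q)"
        unfolding polar Re_rcis by (simp only:)
      also have "\<dots> < 0" using cpos[OF Suc.prems iv] cos_neg_lo[OF th] by (simp add: mult_pos_neg)
      finally show False using Hp[OF Suc.prems, of imin] iv by auto
    qed
  qed
  have spr: "M q - mi q \<ge> pi / real (n q)" if q: "q\<in>{1..p}" for q
    using spread[of "{1..m q}" "\<alpha> q" "n q" "mi q" "M q"] mne[OF q] nz sn np q Mge mile
    unfolding a_def by auto
  have "pi < pi * (\<Sum>q\<in>{1..p}. 1 / real (n q))" using big by simp
  also have "\<dots> = (\<Sum>q\<in>{1..p}. pi / real (n q))" by (simp add: sum_distrib_left)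
  also have "\<dots> \<le> (\<Sum>q\<in>{1..p}. M q - mi q)" using spr by (intro sum_mono) auto
  also have "\<dots> = (\<Sum>q\<in>{1..p}. M q) - (\<Sum>q\<in>{1..p}. mi q)" by (simp add: sum_subtractf)
  also have "\<dots> \<le> pi" using SM[of p] Sm[of p] by simp
  finally show False by simp
qed

lemma numI: "p \<ge> 3 \<Longrightarrow> (\<Sum>q\<in>{1..p}. 1 / real (q + 1)) > 1"
proof -
  assume p: "p \<ge> 3"
  have "(\<Sum>q\<in>{1..3::nat}. 1 / real (q + 1)) = 13/12" by (simp add: eval_nat_numeral)
  moreover have "(\<Sum>q\<in>{1..3::nat}. 1 / real (q + 1)) \<le> (\<Sum>q\<in>{1..p}. 1 / real (q + 1))"
    using p by (intro sum_mono2) auto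
  ultimately show ?thesis by simp
qed

lemma numII: "p \<ge> 7 \<Longrightarrow> (\<Sum>q\<in>{1..p}. 1 / real (2 * q + 1)) > 1"
proof -
  assume p: "p \<ge> 7"
  have "(\<Sum>q\<in>{1..7::nat}. 1 / real (2 * q + 1)) > 1" by (simp add: eval_nat_numeral)
  moreover have "(\<Sum>q\<in>{1..7::nat}. 1 / real (2 * q + 1)) \<le> (\<Sum>q\<in>{1..p}. 1 / real (2 * q + 1))"
    using p by (intro sum_mono2) auto
  ultimately show ?thesis by simp
qed

theorem theorem2p3:
  shows "(\<forall>p m \<alpha>. p \<ge> 3 \<longrightarrow> familyI_coeffs p m \<alpha> \<longrightarrow>
            (\<exists>c\<in>composition_coeffs p m \<alpha>. Re c < 0))
       \<and> (\<forall>p m \<alpha>. p \<ge> 7 \<longrightarrow> familyII_coeffs p m \<alpha> \<longrightarrow>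
            (\<exists>c\<in>composition_coeffs p m \<alpha>. Re c < 0))"
proof (intro conjI allI impI)
  fix p m \<alpha> assume p: "p \<ge> (3::nat)" and f: "familyI_coeffs p m \<alpha>"
  show "\<exists>c\<in>composition_coeffs p m \<alpha>. Re c < 0"
    by (rule main[where n="\<lambda>q. q + 1"]) (use f numI[OF p] in \<open>auto simp: familyI_coeffs_def\<close>)
next
  fix p m \<alpha> assume p: "p \<ge> (7::nat)" and f: "familyII_coeffs p m \<alpha>"
  show "\<exists>c\<in>composition_coeffs p m \<alpha>. Re c < 0"
    by (rule main[where n="\<lambda>q. 2 * q + 1"]) (use f numII[OF p] in \<open>auto simp: familyII_coeffs_def\<close>)
qed

end
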